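(* Let $\gamma<\delta$, $c>0$, $g(t)=c(\delta-t)$ on $[\gamma,\delta]$, and let $0<\beta<\alpha$. Then for every concave function $\varphi:[\gamma,\delta]\to[0,\infty)$ that is not identically zero, \[\frac{\int_\gamma^\delta t\,\varphi(t)^{\alpha-\beta}g(t)^\beta\,dt}{\int_\gamma^\delta \varphi(t)^{\alpha-\beta}g(t)^\beta\,dt}\leq\frac{\int_\gamma^\delta t\,(t-\gamma)^{\alpha-\beta}g(t)^\beta\,dt}{\int_\gamma^\delta (t-\gamma)^{\alpha-\beta}g(t)^\beta\,dt}=\gamma+(\delta-\gamma)\frac{\alpha-\beta+1}{\alpha+2}.\] *)

theory Defs
  imports "HOL-Analysis.Analysis"
begin

end

theory Submission
  imports Defs
begin
lemma bdd_cont_integrable: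
  fixes f :: "real \<Rightarrow> real"
  assumes "continuous_on {a<..<b} f" and "\<And>t. t \<in> {a<..<b} \<Longrightarrow> \<bar>f t\<bar> \<le> B"
  shows "f integrable_on {a..b}"
proof -
  have "f integrable_on {a<..<b}"
  proof (rule measurable_bounded_by_integrable_imp_integrable_real)
    show "f \<in> borel_measurable (lebesgue_on {a<..<b})"
      by (rule continuous_imp_measurable_on_sets_lebesgue[OF assms(1)]) auto
    show "(\<lambda>x. B) integrable_on {a<..<b}"
      using integrable_on_Icc_iff_Ioo integrable_const_ivl by blast
  qed (use assms in auto)
  then show ?thesis using integrable_on_Icc_iff_Ioo by blast
qed

lemma pos_integral:
  fixes f :: "real \<Rightarrow> real"
  assumes "continuous_on {a<..<b} f" "\<And>t. t \<in> {a..b} \<Longrightarrow> 0 \<le> f t"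
    "f integrable_on {a..b}" "x \<in> {a<..<b}" "f x > 0"
  shows "integral {a..b} f > 0"
proof -
  define a' where "a' = (a+x)/2"
  define b' where "b' = (x+b)/2"
  have sub: "{a'..b'} \<subseteq> {a..b}" "{a'..b'} \<subseteq> {a<..<b}" "a' < x" "x < b'"
    using assms(4) by (auto simp: a'_def b'_def)
  have int': "f integrable_on {a'..b'}"
    using integrable_subinterval_real[OF assms(3) sub(1)] .
  have le: "integral {a'..b'} f \<le> integral {a..b} f"
    by (rule integral_subset_le[OF sub(1) int' assms(3)]) (use assms(2) in auto)
  have ge: "0 \<le> integral {a'..b'} f"
    by (rule integral_nonneg[OF int']) (use assms(2) sub in auto)
  have "integral {a'..b'} f \<noteq> 0"
  proof
    assume z: "integral {a'..b'} f = 0"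
    have "f x = 0"
    proof (rule has_integral_0_cbox_imp_0[of a' b' f x])
      show "continuous_on (cbox a' b') f"
        using continuous_on_subset[OF assms(1) sub(2)] by simp
      show "0 \<le> f y" if "y \<in> box a' b'" for y using that sub assms(2) by auto
      show "(f has_integral 0) (cbox a' b')"
        using int' z by (metis cbox_interval integrable_integral)
      show "box a' b' \<noteq> {}" using sub by auto
      show "x \<in> cbox a' b'" using sub by auto
    qed
    with assms(5) show False by simp
  qed
  with le ge show ?thesis by linarith
qed


lemma conc_facts:
  fixes \<gamma> \<delta> :: real and \<phi> :: "real \<Rightarrow> real"
  assumes "\<gamma> < \<delta>" and conc: "concave_on {\<gamma>..\<delta>} \<phi>"
    and nonneg: "\<And>t. t \<in> {\<gamma>..\<delta>} \<Longrightarrow> \<phi> t \<ge> 0"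
  shows "continuous_on {\<gamma><..<\<delta>} \<phi>"
    and "\<And>t. t \<in> {\<gamma>..\<delta>} \<Longrightarrow> \<phi> t \<le> 2 * \<phi> ((\<gamma>+\<delta>)/2)"
    and "\<And>s t. \<gamma> < s \<Longrightarrow> s \<le> t \<Longrightarrow> t \<le> \<delta> \<Longrightarrow> \<phi> t * (s - \<gamma>) \<le> \<phi> s * (t - \<gamma>)"
    and "\<And>t0 t. t0 \<in> {\<gamma>..\<delta>} \<Longrightarrow> \<phi> t0 > 0 \<Longrightarrow> t \<in> {\<gamma><..<\<delta>} \<Longrightarrow> \<phi> t > 0"
proof -
  have "convex_on {\<gamma><..<\<delta>} (\<lambda>x. - \<phi> x)"
    using conc unfolding concave_on_def by (rule convex_on_subset) auto
  then have "continuous_on {\<gamma><..<\<delta>} (\<lambda>x. - \<phi> x)"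
    by (rule convex_on_continuous[rotated]) auto
  then have "continuous_on {\<gamma><..<\<delta>} (\<lambda>x. - (- \<phi> x))"
    by (rule continuous_on_minus)
  then show "continuous_on {\<gamma><..<\<delta>} \<phi>" by simp
next
  fix t assume t: "t \<in> {\<gamma>..\<delta>}"
  have eq: "(1 - 1/2) *\<^sub>R t + (1/2) *\<^sub>R (\<gamma>+\<delta>-t) = (\<gamma>+\<delta>)/2" by (simp add: field_simps)
  have "(1 - 1/2) * \<phi> t + (1/2) * \<phi> (\<gamma>+\<delta>-t) \<le> \<phi> ((1 - 1/2) *\<^sub>R t + (1/2) *\<^sub>R (\<gamma>+\<delta>-t))"
    by (rule concave_onD[OF conc]) (use t in auto)
  then have "(1 - 1/2) * \<phi> t + (1/2) * \<phi> (\<gamma>+\<delta>-t) \<le> \<phi> ((\<gamma>+\<delta>)/2)"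
    unfolding eq .
  moreover have "\<phi> (\<gamma>+\<delta>-t) \<ge> 0" using t nonneg by auto
  ultimately show "\<phi> t \<le> 2 * \<phi> ((\<gamma>+\<delta>)/2)" by (simp add: field_simps)
next
  fix s t assume st: "\<gamma> < s" "s \<le> t" "t \<le> \<delta>"
  define l where "l = (s - \<gamma>) / (t - \<gamma>)"
  have l: "0 \<le> l" "l \<le> 1" using st by (auto simp: l_def)
  have tg: "t - \<gamma> \<noteq> 0" using st by auto
  have "(1 - l) * \<phi> \<gamma> + l * \<phi> t \<le> \<phi> ((1 - l) *\<^sub>R \<gamma> + l *\<^sub>R t)"
    by (rule concave_onD[OF conc]) (use st l assms(1) in auto)
  moreover have "(1 - l) *\<^sub>R \<gamma> + l *\<^sub>R t = s"
    using tg by (simp add: l_def divide_simps) (simp add: algebra_simps)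
  moreover have "\<phi> \<gamma> \<ge> 0" using nonneg assms(1) by auto
  ultimately have "l * \<phi> t \<le> \<phi> s" using l by (smt (verit) mult_nonneg_nonneg)
  then have "l * \<phi> t * (t - \<gamma>) \<le> \<phi> s * (t - \<gamma>)"
    using st by (intro mult_right_mono) auto
  moreover have "l * \<phi> t * (t - \<gamma>) = \<phi> t * (s - \<gamma>)"
    using tg by (simp add: l_def)
  ultimately show "\<phi> t * (s - \<gamma>) \<le> \<phi> s * (t - \<gamma>)" by simp
next
  fix t0 t assume t0: "t0 \<in> {\<gamma>..\<delta>}" "\<phi> t0 > 0" and t: "t \<in> {\<gamma><..<\<delta>}"
  show "\<phi> t > 0"
  proof (cases "t \<le> t0")
    case True
    define l where "l = (t - \<gamma>) / (t0 - \<gamma>)"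
    have l: "0 < l" "l \<le> 1" using True t by (auto simp: l_def)
    have "(1 - l) * \<phi> \<gamma> + l * \<phi> t0 \<le> \<phi> ((1 - l) *\<^sub>R \<gamma> + l *\<^sub>R t0)"
      by (rule concave_onD[OF conc]) (use t0 l assms(1) in auto)
    moreover have "(1 - l) *\<^sub>R \<gamma> + l *\<^sub>R t0 = t"
    proof -
      have "t0 - \<gamma> \<noteq> 0" using True t by auto
      then show ?thesis by (simp add: l_def divide_simps) (simp add: algebra_simps)
    qed
    moreover have "\<phi> \<gamma> \<ge> 0" using nonneg assms(1) by auto
    moreover have "l * \<phi> t0 > 0" using l t0 by simp
    ultimately show ?thesis using l by (smt (verit) mult_nonneg_nonneg)
  next
    case False
    define l where "l = (\<delta> - t) / (\<delta> - t0)"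
    have l: "0 < l" "l \<le> 1" using False t by (auto simp: l_def)
    have "(1 - l) * \<phi> \<delta> + l * \<phi> t0 \<le> \<phi> ((1 - l) *\<^sub>R \<delta> + l *\<^sub>R t0)"
      by (rule concave_onD[OF conc]) (use t0 l assms(1) in auto)
    moreover have "(1 - l) *\<^sub>R \<delta> + l *\<^sub>R t0 = t"
    proof -
      have "\<delta> - t0 \<noteq> 0" using False t by auto
      then show ?thesis by (simp add: l_def divide_simps) (simp add: algebra_simps)
    qed
    moreover have "\<phi> \<delta> \<ge> 0" using nonneg assms(1) by auto
    moreover have "l * \<phi> t0 > 0" using l t0 by simp
    ultimately show ?thesis using l by (smt (verit) mult_nonneg_nonneg)
  qed
qed

lemma d1: "t > \<gamma> \<Longrightarrow> ((\<lambda>t. (t-\<gamma>) powr (p+1)) has_real_derivative (p+1)*(t-\<gamma>) powr p) (at t)"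
  by (rule derivative_eq_intros refl | simp)+
lemma d2: "t < \<delta> \<Longrightarrow> ((\<lambda>t. (\<delta> - t) powr (p+1)) has_real_derivative -((p+1)*(\<delta>-t) powr p)) (at t)"
  apply (rule derivative_eq_intros refl | simp)+
  done

lemma beta_moment:
  fixes \<gamma> \<delta> p b M :: real
  assumes "\<gamma> < \<delta>" "p > 0" "b > 0" and M: "M = \<gamma> + (\<delta>-\<gamma>)*(p+1)/(p+b+2)"
  shows "((\<lambda>t. (t - M) * ((t-\<gamma>) powr p * (\<delta>-t) powr b)) has_integral 0) {\<gamma>..\<delta>}"
proof -
  define F where "F = (\<lambda>t. (t-\<gamma>) powr (p+1) * (\<delta>-t) powr (b+1))"
  define f' where "f' t = -(p+b+2) * ((t - M) * ((t-\<gamma>) powr p * (\<delta>-t) powr b))" for t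
  have cont: "continuous_on {\<gamma>..\<delta>} F"
    unfolding F_def using assms
    by (intro continuous_intros continuous_on_powr') auto
  have der: "(F has_vector_derivative f' t) (at t)" if t: "t \<in> {\<gamma><..<\<delta>}" for t
  proof -
    have "(F has_real_derivative
       (p+1)*(t-\<gamma>) powr p * (\<delta>-t) powr (b+1) + (-((b+1)*(\<delta>-t) powr b)) * (t-\<gamma>) powr (p+1)) (at t)"
      unfolding F_def using t by (intro DERIV_mult d1 d2) auto
    moreover have "(p+1)*(t-\<gamma>) powr p * (\<delta>-t) powr (b+1) + (-((b+1)*(\<delta>-t) powr b)) * (t-\<gamma>) powr (p+1) = f' t"
    proof -
      have e1: "(t-\<gamma>) powr (p+1) = (t-\<gamma>) powr p * (t-\<gamma>)" using t by (simp add: powr_add)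
      have e2: "(\<delta>-t) powr (b+1) = (\<delta>-t) powr b * (\<delta>-t)" using t by (simp add: powr_add)
      have k: "p + b + 2 \<noteq> 0" using assms by auto
      have m: "-(p+b+2)*(t-M) = (p+1)*(\<delta>-t) - (b+1)*(t-\<gamma>)"
        unfolding M using k by (simp add: field_simps) (simp add: algebra_simps)?
      have "f' t = (-(p+b+2)*(t-M)) * ((t-\<gamma>) powr p * (\<delta>-t) powr b)"
        by (simp only: f'_def mult.assoc)
      also have "\<dots> = ((p+1)*(\<delta>-t) - (b+1)*(t-\<gamma>)) * ((t-\<gamma>) powr p * (\<delta>-t) powr b)"
        unfolding m ..
      also have "\<dots> = (p+1)*(t-\<gamma>) powr p * (\<delta>-t) powr (b+1) + (-((b+1)*(\<delta>-t) powr b)) * (t-\<gamma>) powr (p+1)"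
        unfolding e1 e2 by (simp add: algebra_simps)
      finally show ?thesis by (rule sym)
    qed
    ultimately show ?thesis by (simp add: has_real_derivative_iff_has_vector_derivative)
  qed
  have "(f' has_integral (F \<delta> - F \<gamma>)) {\<gamma>..\<delta>}"
    by (rule fundamental_theorem_of_calculus_interior[OF _ cont der]) (use assms in auto)
  moreover have "F \<delta> - F \<gamma> = 0" using assms by (simp add: F_def)
  ultimately have h0: "(f' has_integral 0) {\<gamma>..\<delta>}" by simp
  have k: "p + b + 2 \<noteq> 0" using assms by auto
  have h1: "((\<lambda>t. (-1/(p+b+2)) * f' t) has_integral 0) {\<gamma>..\<delta>}"
    using has_integral_mult_right[OF h0, of "-1/(p+b+2)"] by simp
  show ?thesis
  proof (rule has_integral_eq[OF _ h1])
    have kk: "(-1/(p+b+2)) * (-(p+b+2)) = 1" using k by (simp add: field_simps)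
    show "(-1/(p+b+2)) * f' x = (x - M) * ((x-\<gamma>) powr p * (\<delta>-x) powr b)" for x
      by (simp only: f'_def mult.assoc[symmetric] kk mult_1)
  qed
qed

lemma main_lemma:
  fixes \<gamma> \<delta> c p b M :: real and g \<phi> :: "real \<Rightarrow> real"
  assumes gd: "\<gamma> < \<delta>" and c: "c > 0"
    and g_def: "\<And>t. t \<in> {\<gamma>..\<delta>} \<Longrightarrow> g t = c * (\<delta> - t)"
    and p: "0 < p" and b: "0 < b"
    and conc: "concave_on {\<gamma>..\<delta>} \<phi>"
    and nonneg: "\<And>t. t \<in> {\<gamma>..\<delta>} \<Longrightarrow> \<phi> t \<ge> 0"
    and nonzero: "\<exists>t\<in>{\<gamma>..\<delta>}. \<phi> t \<noteq> 0"
    and M: "M = \<gamma> + (\<delta>-\<gamma>)*(p+1)/(p+b+2)"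
  shows "integral {\<gamma>..\<delta>} (\<lambda>t. t * \<phi> t powr p * g t powr b)
           / integral {\<gamma>..\<delta>} (\<lambda>t. \<phi> t powr p * g t powr b) \<le> M"
    and "integral {\<gamma>..\<delta>} (\<lambda>t. t * (t - \<gamma>) powr p * g t powr b)
           / integral {\<gamma>..\<delta>} (\<lambda>t. (t - \<gamma>) powr p * g t powr b) = M"
proof -
  define w where "w = (\<lambda>t. \<phi> t powr p * g t powr b)"
  define v where "v = (\<lambda>t. (t - \<gamma>) powr p * g t powr b)"
  define m0 where "m0 = (\<gamma>+\<delta>)/2"
  have m0: "m0 \<in> {\<gamma><..<\<delta>}" using gd by (auto simp: m0_def)
  have Mg: "\<gamma> < M" and Md: "M < \<delta>"
  proof -
    have "0 < (p+1)/(p+b+2)" "(p+1)/(p+b+2) < 1" using p b by auto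
    then have "0 < (\<delta>-\<gamma>)*((p+1)/(p+b+2))" "(\<delta>-\<gamma>)*((p+1)/(p+b+2)) < (\<delta>-\<gamma>)"
      using gd mult_strict_left_mono[of "(p+1)/(p+b+2)" 1 "\<delta>-\<gamma>"] mult_pos_pos[of "\<delta>-\<gamma>" "(p+1)/(p+b+2)"] by auto
    moreover have "M = \<gamma> + (\<delta>-\<gamma>)*((p+1)/(p+b+2))" unfolding M by simp
    ultimately show "\<gamma> < M" "M < \<delta>" by linarith+
  qed
  have gnn: "g t \<ge> 0" if "t \<in> {\<gamma>..\<delta>}" for t using g_def[OF that] that c by auto
  have gpow: "g t powr b = c powr b * (\<delta> - t) powr b" if "t \<in> {\<gamma>..\<delta>}" for t
    using g_def[OF that] that c by (simp add: powr_mult)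
  have fc: "continuous_on {\<gamma><..<\<delta>} \<phi>"
    and fb: "\<And>t. t \<in> {\<gamma>..\<delta>} \<Longrightarrow> \<phi> t \<le> 2 * \<phi> ((\<gamma>+\<delta>)/2)"
    and fr: "\<And>s t. \<gamma> < s \<Longrightarrow> s \<le> t \<Longrightarrow> t \<le> \<delta> \<Longrightarrow> \<phi> t * (s - \<gamma>) \<le> \<phi> s * (t - \<gamma>)"
    and fp: "\<And>t0 t. t0 \<in> {\<gamma>..\<delta>} \<Longrightarrow> \<phi> t0 > 0 \<Longrightarrow> t \<in> {\<gamma><..<\<delta>} \<Longrightarrow> \<phi> t > 0"
    by (rule conc_facts[OF gd conc nonneg]; assumption)+
  have phim0: "\<phi> m0 > 0"
  proof -
    obtain t0 where "t0 \<in> {\<gamma>..\<delta>}" "\<phi> t0 \<noteq> 0" using nonzero by blast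
    moreover have "\<phi> t0 > 0" using nonneg[OF \<open>t0 \<in> {\<gamma>..\<delta>}\<close>] \<open>\<phi> t0 \<noteq> 0\<close> by linarith
    ultimately show ?thesis using fp[OF _ _ m0] by blast
  qed
  have vcont: "continuous_on {\<gamma>..\<delta>} v"
  proof -
    have "continuous_on {\<gamma>..\<delta>} (\<lambda>t. (t - \<gamma>) powr p * (c powr b * (\<delta> - t) powr b))"
      using p b by (intro continuous_intros continuous_on_powr') auto
    then show ?thesis unfolding v_def by (rule continuous_on_cong[THEN iffD1, rotated 2]) (auto simp: gpow)
  qed
  have vint: "v integrable_on {\<gamma>..\<delta>}" by (rule integrable_continuous_interval[OF vcont])
  have tvint: "(\<lambda>t. t * v t) integrable_on {\<gamma>..\<delta>}"
    by (rule integrable_continuous_interval) (intro continuous_intros vcont)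
  have vnn: "v t \<ge> 0" if "t \<in> {\<gamma>..\<delta>}" for t using gnn[OF that] by (simp add: v_def)
  have mom: "((\<lambda>t. (t - M) * v t) has_integral 0) {\<gamma>..\<delta>}"
  proof -
    have "((\<lambda>t. c powr b * ((t - M) * ((t-\<gamma>) powr p * (\<delta>-t) powr b))) has_integral c powr b * 0) {\<gamma>..\<delta>}"
      by (rule has_integral_mult_right[OF beta_moment[OF gd p b M]])
    then have h: "((\<lambda>t. c powr b * ((t - M) * ((t-\<gamma>) powr p * (\<delta>-t) powr b))) has_integral 0) {\<gamma>..\<delta>}"
      by (rule has_integral_eq_rhs) simp
    show ?thesis
      by (rule has_integral_eq[OF _ h]) (simp add: v_def gpow)
  qed
  have "integral {\<gamma>..\<delta>} (\<lambda>t. (t - M) * v t) = integral {\<gamma>..\<delta>} (\<lambda>t. t * v t) - M * integral {\<gamma>..\<delta>} v"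
  proof -
    have "integral {\<gamma>..\<delta>} (\<lambda>t. (t - M) * v t) = integral {\<gamma>..\<delta>} (\<lambda>t. t * v t - M * v t)"
      by (rule integral_cong) (simp add: left_diff_distrib)
    also have "\<dots> = integral {\<gamma>..\<delta>} (\<lambda>t. t * v t) - integral {\<gamma>..\<delta>} (\<lambda>t. M * v t)"
      by (rule integral_diff[OF tvint]) (rule integrable_cmul[OF vint, unfolded real_scaleR_def])
    also have "integral {\<gamma>..\<delta>} (\<lambda>t. M * v t) = M * integral {\<gamma>..\<delta>} v"
      by (rule integral_mult_right)
    finally show ?thesis .
  qed
  then have vmom: "integral {\<gamma>..\<delta>} (\<lambda>t. t * v t) = M * integral {\<gamma>..\<delta>} v"
    using integral_unique[OF mom] by simp
  have vpos: "integral {\<gamma>..\<delta>} v > 0"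
  proof (rule pos_integral[OF continuous_on_subset[OF vcont] vnn vint m0])
    show "0 < v m0" using m0 c b p by (simp add: v_def g_def powr_gt_zero)
  qed auto
  show "integral {\<gamma>..\<delta>} (\<lambda>t. t * (t - \<gamma>) powr p * g t powr b)
           / integral {\<gamma>..\<delta>} (\<lambda>t. (t - \<gamma>) powr p * g t powr b) = M"
    using vmom vpos unfolding v_def by (simp add: mult.assoc)
  define B where "B = (2 * \<phi> m0) powr p * (c * (\<delta> - \<gamma>)) powr b"
  have wnn: "w t \<ge> 0" for t by (simp add: w_def)
  have wB: "w t \<le> B" if "t \<in> {\<gamma>..\<delta>}" for t
    unfolding w_def B_def
  proof (rule mult_mono)
    show "\<phi> t powr p \<le> (2 * \<phi> m0) powr p"
      using fb[OF that] nonneg[OF that] p by (intro powr_mono2) (auto simp: m0_def)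
    show "g t powr b \<le> (c * (\<delta> - \<gamma>)) powr b"
      using that c b gnn[OF that] by (intro powr_mono2) (auto simp: g_def)
  qed auto
  have wcont: "continuous_on {\<gamma><..<\<delta>} w"
  proof -
    have "continuous_on {\<gamma><..<\<delta>} (\<lambda>t. \<phi> t powr p * (c * (\<delta> - t)) powr b)"
      using p b c nonneg by (intro continuous_intros continuous_on_powr' fc) auto
    then show ?thesis unfolding w_def by (rule continuous_on_cong[THEN iffD1, rotated 2]) (auto simp: g_def)
  qed
  have wint: "w integrable_on {\<gamma>..\<delta>}"
    by (rule bdd_cont_integrable[OF wcont, of B]) (use wB wnn in auto)
  have twint: "(\<lambda>t. t * w t) integrable_on {\<gamma>..\<delta>}"
  proof (rule bdd_cont_integrable[of _ _ _ "(\<bar>\<gamma>\<bar> + \<bar>\<delta>\<bar>) * B"])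
    show "continuous_on {\<gamma><..<\<delta>} (\<lambda>t. t * w t)" by (intro continuous_intros wcont)
    fix t assume t: "t \<in> {\<gamma><..<\<delta>}"
    have "\<bar>t * w t\<bar> = \<bar>t\<bar> * w t" using wnn by (simp add: abs_mult)
    also have "\<dots> \<le> (\<bar>\<gamma>\<bar> + \<bar>\<delta>\<bar>) * B"
      by (rule mult_mono) (use t wB wnn in auto)
    finally show "\<bar>t * w t\<bar> \<le> (\<bar>\<gamma>\<bar> + \<bar>\<delta>\<bar>) * B" .
  qed
  have wpos: "integral {\<gamma>..\<delta>} w > 0"
  proof (rule pos_integral[OF wcont _ wint m0])
    show "0 < w m0" using m0 c b p phim0 by (simp add: w_def g_def powr_gt_zero)
  qed (use wnn in auto)
  define K where "K = (\<phi> M / (M - \<gamma>)) powr p"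
  have pw: "(t - M) * w t \<le> K * ((t - M) * v t)" if t: "t \<in> {\<gamma>..\<delta>}" for t
  proof (cases "t = \<gamma>")
    case True
    then have "v t = 0" using p by (simp add: v_def)
    moreover have "(t - M) * w t \<le> 0" using True Mg wnn by (simp add: mult_nonpos_nonneg)
    ultimately show ?thesis by simp
  next
    case False
    then have tg: "t > \<gamma>" using t by auto
    define r where "r = \<phi> t / (t - \<gamma>)"
    define R where "R = \<phi> M / (M - \<gamma>)"
    have r0: "r \<ge> 0" using tg nonneg[OF t] by (simp add: r_def)
    have R0: "R \<ge> 0" using Mg Md nonneg[of M] by (simp add: R_def)
    have "\<phi> t powr p = r powr p * (t - \<gamma>) powr p"
      using tg nonneg[OF t] by (simp add: r_def powr_divide)
    then have wv: "w t = r powr p * v t" by (simp add: w_def v_def)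
    show ?thesis
    proof (cases "M \<le> t")
      case True
      have "\<phi> t * (M - \<gamma>) \<le> \<phi> M * (t - \<gamma>)" using fr[OF Mg True] t by auto
      then have "r \<le> R" using tg Mg by (simp add: r_def R_def field_simps)
      then have "r powr p \<le> K" unfolding K_def R_def[symmetric] using r0 p by (intro powr_mono2) auto
      moreover have "(t - M) * v t \<ge> 0" using True vnn[OF t] by simp
      ultimately have "r powr p * ((t - M) * v t) \<le> K * ((t - M) * v t)" by (rule mult_right_mono)
      moreover have "(t - M) * w t = r powr p * ((t - M) * v t)" unfolding wv by (simp add: algebra_simps)
      ultimately show ?thesis by linarith
    next
      case False
      have "\<phi> M * (t - \<gamma>) \<le> \<phi> t * (M - \<gamma>)" using fr[OF tg, of M] False Md by auto
      then have "R \<le> r" using tg Mg by (simp add: r_def R_def field_simps)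
      then have "K \<le> r powr p" unfolding K_def R_def[symmetric] using R0 p by (intro powr_mono2) auto
      moreover have "(t - M) * v t \<le> 0" using False vnn[OF t] by (simp add: mult_nonpos_nonneg)
      ultimately have "r powr p * ((t - M) * v t) \<le> K * ((t - M) * v t)" by (rule mult_right_mono_neg)
      moreover have "(t - M) * w t = r powr p * ((t - M) * v t)" unfolding wv by (simp add: algebra_simps)
      ultimately show ?thesis by linarith
    qed
  qed
  have "integral {\<gamma>..\<delta>} (\<lambda>t. (t - M) * w t) \<le> integral {\<gamma>..\<delta>} (\<lambda>t. K * ((t - M) * v t))"
  proof (rule integral_le)
    show "(t - M) * w t \<le> K * ((t - M) * v t)" if "t \<in> {\<gamma>..\<delta>}" for t
      using pw[OF that] .
    show "(\<lambda>t. (t - M) * w t) integrable_on {\<gamma>..\<delta>}"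
      unfolding left_diff_distrib
      by (rule integrable_diff[OF twint]) (rule integrable_cmul[OF wint, unfolded real_scaleR_def])
    show "(\<lambda>t. K * ((t - M) * v t)) integrable_on {\<gamma>..\<delta>}"
      by (rule has_integral_integrable[OF has_integral_mult_right[OF mom]])
  qed
  also have "\<dots> = 0" using integral_unique[OF has_integral_mult_right[OF mom, of K]] by simp
  finally have le0: "integral {\<gamma>..\<delta>} (\<lambda>t. (t - M) * w t) \<le> 0" .
  have "integral {\<gamma>..\<delta>} (\<lambda>t. (t - M) * w t) = integral {\<gamma>..\<delta>} (\<lambda>t. t * w t) - M * integral {\<gamma>..\<delta>} w"
  proof -
    have "integral {\<gamma>..\<delta>} (\<lambda>t. (t - M) * w t) = integral {\<gamma>..\<delta>} (\<lambda>t. t * w t - M * w t)"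
      by (rule integral_cong) (simp add: left_diff_distrib)
    also have "\<dots> = integral {\<gamma>..\<delta>} (\<lambda>t. t * w t) - integral {\<gamma>..\<delta>} (\<lambda>t. M * w t)"
      by (rule integral_diff[OF twint]) (rule integrable_cmul[OF wint, unfolded real_scaleR_def])
    also have "integral {\<gamma>..\<delta>} (\<lambda>t. M * w t) = M * integral {\<gamma>..\<delta>} w"
      by (rule integral_mult_right)
    finally show ?thesis .
  qed
  with le0 have A: "integral {\<gamma>..\<delta>} (\<lambda>t. t * w t) \<le> M * integral {\<gamma>..\<delta>} w" by linarith
  have e1: "integral {\<gamma>..\<delta>} (\<lambda>t. t * \<phi> t powr p * g t powr b) = integral {\<gamma>..\<delta>} (\<lambda>t. t * w t)"
    by (simp add: w_def mult.assoc)
  have e2: "integral {\<gamma>..\<delta>} (\<lambda>t. \<phi> t powr p * g t powr b) = integral {\<gamma>..\<delta>} w"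
    by (simp add: w_def)
  show "integral {\<gamma>..\<delta>} (\<lambda>t. t * \<phi> t powr p * g t powr b)
           / integral {\<gamma>..\<delta>} (\<lambda>t. \<phi> t powr p * g t powr b) \<le> M"
    unfolding e1 e2 pos_divide_le_eq[OF wpos] by (rule A)
qed

theorem mainTheorem8:
  fixes \<gamma> \<delta> c \<alpha> \<beta> :: real and g \<phi> :: "real \<Rightarrow> real"
  assumes "\<gamma> < \<delta>" and "c > 0"
    and g_def: "\<And>t. t \<in> {\<gamma>..\<delta>} \<Longrightarrow> g t = c * (\<delta> - t)"
    and "0 < \<beta>" and "\<beta> < \<alpha>"
    and conc: "concave_on {\<gamma>..\<delta>} \<phi>"
    and nonneg: "\<And>t. t \<in> {\<gamma>..\<delta>} \<Longrightarrow> \<phi> t \<ge> 0"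
    and nonzero: "\<exists>t\<in>{\<gamma>..\<delta>}. \<phi> t \<noteq> 0"
  shows "(integral {\<gamma>..\<delta>} (\<lambda>t. t * \<phi> t powr (\<alpha> - \<beta>) * g t powr \<beta>)
           / integral {\<gamma>..\<delta>} (\<lambda>t. \<phi> t powr (\<alpha> - \<beta>) * g t powr \<beta>)
         \<le> integral {\<gamma>..\<delta>} (\<lambda>t. t * (t - \<gamma>) powr (\<alpha> - \<beta>) * g t powr \<beta>)
           / integral {\<gamma>..\<delta>} (\<lambda>t. (t - \<gamma>) powr (\<alpha> - \<beta>) * g t powr \<beta>)) \<and>
         (integral {\<gamma>..\<delta>} (\<lambda>t. t * (t - \<gamma>) powr (\<alpha> - \<beta>) * g t powr \<beta>)
           / integral {\<gamma>..\<delta>} (\<lambda>t. (t - \<gamma>) powr (\<alpha> - \<beta>) * g t powr \<beta>)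
         = \<gamma> + (\<delta> - \<gamma>) * (\<alpha> - \<beta> + 1) / (\<alpha> + 2))"
proof -
  define M where "M = \<gamma> + (\<delta>-\<gamma>)*((\<alpha> - \<beta>)+1)/((\<alpha> - \<beta>)+\<beta>+2)"
  have ab: "0 < \<alpha> - \<beta>" using assms by simp
  note L = main_lemma[OF assms(1,2) g_def ab assms(4) conc nonneg nonzero M_def]
  have eq: "M = \<gamma> + (\<delta> - \<gamma>) * (\<alpha> - \<beta> + 1) / (\<alpha> + 2)" by (simp add: M_def)
  show ?thesis unfolding eq[symmetric] using L(1) L(2) by (intro conjI) linarith+
qed

end
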